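(* (a) For every real number $M>0$ there exist connected graphs $H$ and $G$ with $H$ a subgraph of $G$ such that $\frac{\textnormal{sdim}(H)}{\textnormal{sdim}(G)}>M$. (b) Let $G$ and $H$ be connected graphs. If $H_{\rm SR}$ is a subgraph of $G_{\rm SR}$, then $\textnormal{sdim}(H)\le \textnormal{sdim}(G)$.
   Context: All graphs are finite, simple and undirected; $d(x,y)$ is the shortest-path distance. A set $S\subseteq V(G)$ is a strong resolving set of a connected graph $G$ if for all distinct $x,y\in V(G)$ there exists $z\in S$ such that $x$ lies on a $y$–$z$ geodesic or $y$ lies on an $x$–$z$ geodesic; $\textnormal{sdim}(G)$ is the minimum cardinality of a strong resolving set. A vertex $u$ is maximally distant from $v$ if $d(u,v)\ge d(w,v)$ for every neighbor $w$ of $u$; $u$ and $v$ are mutually maximally distant (MMD) if each is maximally distant from the other. The strong resolving graph $G_{\rm SR}$ has vertex set $\{x\in V(G): x \text{ is MMD with some } y\in V(G)\}$, and $uv$ is an edge of $G_{\rm SR}$ iff $u$ and $v$ are MMD in $G$. *)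

theory Defs
  imports Complex_Main
begin

definition simple_graph :: "'a set \<Rightarrow> ('a \<Rightarrow> 'a \<Rightarrow> bool) \<Rightarrow> bool" where
  "simple_graph V E \<longleftrightarrow> finite V \<and>
     (\<forall>x y. E x y \<longrightarrow> x \<in> V \<and> y \<in> V \<and> x \<noteq> y \<and> E y x)"

text \<open>A walk from x to y: a nonempty vertex list with consecutive vertices adjacent;
  its length is the number of edges, i.e. length minus one.\<close>
definition walk :: "'a set \<Rightarrow> ('a \<Rightarrow> 'a \<Rightarrow> bool) \<Rightarrow> 'a list \<Rightarrow> 'a \<Rightarrow> 'a \<Rightarrow> bool" where
  "walk V E xs x y \<longleftrightarrow> xs \<noteq> [] \<and> set xs \<subseteq> V \<and> hd xs = x \<and> last xs = y \<and>
     (\<forall>i. Suc i < length xs \<longrightarrow> E (xs ! i) (xs ! Suc i))"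

definition connected_graph :: "'a set \<Rightarrow> ('a \<Rightarrow> 'a \<Rightarrow> bool) \<Rightarrow> bool" where
  "connected_graph V E \<longleftrightarrow> simple_graph V E \<and> V \<noteq> {} \<and>
     (\<forall>x\<in>V. \<forall>y\<in>V. \<exists>xs. walk V E xs x y)"

definition gdist :: "'a set \<Rightarrow> ('a \<Rightarrow> 'a \<Rightarrow> bool) \<Rightarrow> 'a \<Rightarrow> 'a \<Rightarrow> nat" where
  "gdist V E x y = (LEAST n. \<exists>xs. walk V E xs x y \<and> length xs = Suc n)"

definition on_geodesic :: "'a set \<Rightarrow> ('a \<Rightarrow> 'a \<Rightarrow> bool) \<Rightarrow> 'a \<Rightarrow> 'a \<Rightarrow> 'a \<Rightarrow> bool" where
  "on_geodesic V E x y z \<longleftrightarrow>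
     (\<exists>xs. walk V E xs y z \<and> length xs = Suc (gdist V E y z) \<and> x \<in> set xs)"

definition strong_resolving_set :: "'a set \<Rightarrow> ('a \<Rightarrow> 'a \<Rightarrow> bool) \<Rightarrow> 'a set \<Rightarrow> bool" where
  "strong_resolving_set V E S \<longleftrightarrow> S \<subseteq> V \<and>
     (\<forall>x\<in>V. \<forall>y\<in>V. x \<noteq> y \<longrightarrow>
        (\<exists>z\<in>S. on_geodesic V E x y z \<or> on_geodesic V E y x z))"

definition sdim :: "'a set \<Rightarrow> ('a \<Rightarrow> 'a \<Rightarrow> bool) \<Rightarrow> nat" where
  "sdim V E = Min {card S | S. strong_resolving_set V E S}"

definition maximally_distant :: "'a set \<Rightarrow> ('a \<Rightarrow> 'a \<Rightarrow> bool) \<Rightarrow> 'a \<Rightarrow> 'a \<Rightarrow> bool" where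
  "maximally_distant V E u v \<longleftrightarrow> u \<in> V \<and> v \<in> V \<and>
     (\<forall>w. E u w \<longrightarrow> gdist V E w v \<le> gdist V E u v)"

definition MMD :: "'a set \<Rightarrow> ('a \<Rightarrow> 'a \<Rightarrow> bool) \<Rightarrow> 'a \<Rightarrow> 'a \<Rightarrow> bool" where
  "MMD V E u v \<longleftrightarrow> maximally_distant V E u v \<and> maximally_distant V E v u"

definition SR_vertices :: "'a set \<Rightarrow> ('a \<Rightarrow> 'a \<Rightarrow> bool) \<Rightarrow> 'a set" where
  "SR_vertices V E = {x \<in> V. \<exists>y\<in>V. MMD V E x y}"

definition SR_edges :: "'a set \<Rightarrow> ('a \<Rightarrow> 'a \<Rightarrow> bool) \<Rightarrow> 'a \<Rightarrow> 'a \<Rightarrow> bool" where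
  "SR_edges V E u v \<longleftrightarrow> u \<noteq> v \<and> MMD V E u v"

text \<open>(V1,E1) is a subgraph of (V2,E2) (literally, same vertex names).\<close>
definition subgraph :: "'a set \<Rightarrow> ('a \<Rightarrow> 'a \<Rightarrow> bool) \<Rightarrow> 'a set \<Rightarrow> ('a \<Rightarrow> 'a \<Rightarrow> bool) \<Rightarrow> bool" where
  "subgraph V1 E1 V2 E2 \<longleftrightarrow> V1 \<subseteq> V2 \<and> (\<forall>x y. E1 x y \<longrightarrow> E2 x y)"

definition subgraph_iso :: "'a set \<Rightarrow> ('a \<Rightarrow> 'a \<Rightarrow> bool) \<Rightarrow> 'b set \<Rightarrow> ('b \<Rightarrow> 'b \<Rightarrow> bool) \<Rightarrow> bool" where
  "subgraph_iso V1 E1 V2 E2 \<longleftrightarrow> (\<exists>f. inj_on f V1 \<and> f ` V1 \<subseteq> V2 \<and>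
     (\<forall>x\<in>V1. \<forall>y\<in>V1. E1 x y \<longrightarrow> E2 (f x) (f y)))"

end

theory Submission
  imports Defs
begin


lemma walk_one: "walk V E [a] x y \<longleftrightarrow> a = x \<and> a = y \<and> a \<in> V"
  by (auto simp: walk_def)

lemma walk_two: "walk V E (a # b # rest) x y \<longleftrightarrow>
   a = x \<and> a \<in> V \<and> E a b \<and> walk V E (b # rest) b y"
proof
  assume w: "walk V E (a # b # rest) x y"
  have all: "\<forall>i. Suc i < length (a # b # rest) \<longrightarrow> E ((a # b # rest) ! i) ((a # b # rest) ! Suc i)"
    using w unfolding walk_def by blast
  have "E a b" using all[rule_format, of 0] by simp
  moreover have "\<forall>i. Suc i < length (b # rest) \<longrightarrow> E ((b # rest) ! i) ((b # rest) ! Suc i)"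
  proof (intro allI impI)
    fix i assume "Suc i < length (b # rest)"
    then show "E ((b # rest) ! i) ((b # rest) ! Suc i)" using all[rule_format, of "Suc i"] by simp
  qed
  ultimately show "a = x \<and> a \<in> V \<and> E a b \<and> walk V E (b # rest) b y"
    using w unfolding walk_def by auto
next
  assume h: "a = x \<and> a \<in> V \<and> E a b \<and> walk V E (b # rest) b y"
  have all: "\<forall>i. Suc i < length (b # rest) \<longrightarrow> E ((b # rest) ! i) ((b # rest) ! Suc i)"
    using h unfolding walk_def by blast
  have "\<forall>i. Suc i < length (a # b # rest) \<longrightarrow> E ((a # b # rest) ! i) ((a # b # rest) ! Suc i)"
  proof (intro allI impI)
    fix i assume i: "Suc i < length (a # b # rest)"
    show "E ((a # b # rest) ! i) ((a # b # rest) ! Suc i)"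
    proof (cases i)
      case 0 then show ?thesis using h by auto
    next
      case (Suc j) then show ?thesis using all[rule_format, of j] i by simp
    qed
  qed
  then show "walk V E (a # b # rest) x y" using h unfolding walk_def by auto
qed

lemma walk_nonempty: "walk V E xs x y \<Longrightarrow> xs \<noteq> []"
  by (simp add: walk_def)

lemma walk_ends: "walk V E xs x y \<Longrightarrow> x \<in> V \<and> y \<in> V"
  unfolding walk_def by (metis hd_in_set last_in_set subsetD)

lemma walk_append:
  "walk V E xs x y \<Longrightarrow> walk V E ys y z \<Longrightarrow> walk V E (xs @ tl ys) x z"
proof (induction xs arbitrary: x)
  case Nil then show ?case by (simp add: walk_def)
next
  case (Cons a xs)
  show ?case
  proof (cases xs)
    case Nil
    with Cons.prems have "a = x" "a = y" by (auto simp: walk_one)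
    moreover have "ys \<noteq> []" "hd ys = y" using Cons.prems by (auto simp: walk_def)
    ultimately have "[a] @ tl ys = ys" by (cases ys) auto
    then show ?thesis using Nil Cons.prems \<open>a = x\<close> \<open>a = y\<close> by simp
  next
    case (Cons b rest)
    with Cons.prems have h: "a = x" "a \<in> V" "E a b" "walk V E (b # rest) b y"
      by (auto simp: walk_two)
    have "walk V E ((b # rest) @ tl ys) b z" using Cons.IH h Cons.prems local.Cons by blast
    then show ?thesis using h local.Cons
      by (cases "rest @ tl ys") (auto simp: walk_two walk_one)
  qed
qed

lemma walk_rev:
  assumes sym: "\<And>a b. E a b \<Longrightarrow> E b a"
  shows "walk V E xs x y \<Longrightarrow> walk V E (rev xs) y x"
proof (induction xs arbitrary: x)
  case Nil then show ?case by (simp add: walk_def)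
next
  case (Cons a xs)
  show ?case
  proof (cases xs)
    case Nil then show ?thesis using Cons.prems by (auto simp: walk_one)
  next
    case (Cons b rest)
    with Cons.prems have h: "a = x" "a \<in> V" "E a b" "walk V E (b # rest) b y"
      by (auto simp: walk_two)
    have r: "walk V E (rev (b # rest)) y b" using Cons.IH h local.Cons by blast
    have "walk V E [b, a] b a" using h sym walk_ends[OF h(4)] by (auto simp: walk_two walk_one)
    from walk_append[OF r this] show ?thesis using h local.Cons by simp
  qed
qed

lemma walk_split:
  "walk V E xs y z \<Longrightarrow> x \<in> set xs \<Longrightarrow>
    \<exists>p q. walk V E p y x \<and> walk V E q x z \<and> length p + length q = Suc (length xs)"
proof (induction xs arbitrary: y)
  case Nil then show ?case by simp
next
  case (Cons a xs)
  show ?case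
  proof (cases xs)
    case Nil then show ?thesis using Cons.prems
      by (intro exI[of _ "[a]"]) (auto simp: walk_one)
  next
    case (Cons b rest)
    with Cons.prems have h: "a = y" "a \<in> V" "E a b" "walk V E (b # rest) b z"
      by (auto simp: walk_two)
    show ?thesis
    proof (cases "x = a")
      case True
      then show ?thesis using Cons.prems h
        by (intro exI[of _ "[a]"] exI[of _ "a # xs"]) (auto simp: walk_one)
    next
      case False
      then have "x \<in> set xs" using Cons.prems by simp
      then obtain p q where pq: "walk V E p b x" "walk V E q x z"
        "length p + length q = Suc (length xs)"
        using Cons.IH h local.Cons by blast
      then obtain p' where p': "p = b # p'" unfolding walk_def by (cases p) auto
      have "walk V E (a # p) y x" using pq p' h by (simp add: walk_two)
      then show ?thesis using pq by (intro exI[of _ "a # p"] exI[of _ q]) auto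
    qed
  qed
qed

lemma gdist_le: "walk V E xs x y \<Longrightarrow> gdist V E x y \<le> length xs - 1"
proof -
  assume w: "walk V E xs x y"
  then have "length xs = Suc (length xs - 1)" by (cases xs) (auto simp: walk_def)
  then have "\<exists>ys. walk V E ys x y \<and> length ys = Suc (length xs - 1)" using w by blast
  then show ?thesis unfolding gdist_def by (rule Least_le)
qed

lemma gdist_walk: "walk V E xs x y \<Longrightarrow>
   \<exists>ys. walk V E ys x y \<and> length ys = Suc (gdist V E x y)"
proof -
  assume "walk V E xs x y"
  moreover have "length xs = Suc (length xs - 1)" using \<open>walk V E xs x y\<close> by (cases xs) (auto simp: walk_def)
  ultimately have "\<exists>n ys. walk V E ys x y \<and> length ys = Suc n" by blast
  then show ?thesis unfolding gdist_def by (rule LeastI_ex)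
qed

context
  fixes V :: "'a set" and E
  assumes cg: "connected_graph V E"
begin

lemma cg_sym: "E a b \<Longrightarrow> E b a"
  using cg by (auto simp: connected_graph_def simple_graph_def)

lemma cg_in: "E a b \<Longrightarrow> a \<in> V \<and> b \<in> V \<and> a \<noteq> b"
  using cg by (auto simp: connected_graph_def simple_graph_def)

lemma cg_fin: "finite V"
  using cg by (auto simp: connected_graph_def simple_graph_def)

lemma cg_shortest: "x \<in> V \<Longrightarrow> y \<in> V \<Longrightarrow>
   \<exists>ys. walk V E ys x y \<and> length ys = Suc (gdist V E x y)"
  using cg gdist_walk unfolding connected_graph_def by metis

lemma d_sym: "x \<in> V \<Longrightarrow> y \<in> V \<Longrightarrow> gdist V E x y = gdist V E y x"
proof -
  have *: "gdist V E a b \<le> gdist V E b a" if ab: "a \<in> V" "b \<in> V" for a b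
  proof -
    obtain ys where "walk V E ys b a" "length ys = Suc (gdist V E b a)"
      using cg_shortest ab by blast
    then show ?thesis using gdist_le[OF walk_rev[OF cg_sym]] by fastforce
  qed
  assume "x \<in> V" "y \<in> V" then show ?thesis using * by (meson antisym)
qed

lemma d_tri: "x \<in> V \<Longrightarrow> y \<in> V \<Longrightarrow> z \<in> V \<Longrightarrow>
  gdist V E x z \<le> gdist V E x y + gdist V E y z"
proof -
  assume a: "x \<in> V" "y \<in> V" "z \<in> V"
  obtain p where p: "walk V E p x y" "length p = Suc (gdist V E x y)"
    using cg_shortest a by blast
  obtain q where q: "walk V E q y z" "length q = Suc (gdist V E y z)"
    using cg_shortest a by blast
  from gdist_le[OF walk_append[OF p(1) q(1)]] p(2) q(2) show ?thesis by simp
qed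

lemma d_self: "x \<in> V \<Longrightarrow> gdist V E x x = 0"
  unfolding gdist_def
  by (rule Least_eq_0) (rule exI[of _ "[x]"], simp add: walk_one)

lemma d_self_0: "x \<in> V \<Longrightarrow> y \<in> V \<Longrightarrow> gdist V E x y = 0 \<Longrightarrow> x = y"
proof -
  assume a: "x \<in> V" "y \<in> V" "gdist V E x y = 0"
  obtain p where "walk V E p x y" "length p = Suc (gdist V E x y)"
    using cg_shortest a by blast
  then show ?thesis using a(3) by (cases p) (auto simp: walk_one)
qed

lemma d_edge: "E a b \<Longrightarrow> gdist V E a b \<le> 1"
proof -
  assume e: "E a b"
  then have "walk V E [a, b] a b" using cg_in[OF e] by (simp add: walk_two walk_one)
  from gdist_le[OF this] show ?thesis by simp
qed

lemma d_step: "x \<in> V \<Longrightarrow> y \<in> V \<Longrightarrow> x \<noteq> y \<Longrightarrow>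
   \<exists>w. E x w \<and> gdist V E w y + 1 = gdist V E x y"
proof -
  assume a: "x \<in> V" "y \<in> V" "x \<noteq> y"
  obtain p where p: "walk V E p x y" "length p = Suc (gdist V E x y)"
    using cg_shortest a by blast
  then obtain b rest where br: "p = x # b # rest" using a
    by (cases p; cases "tl p") (auto simp: walk_def)
  then have h: "E x b" "walk V E (b # rest) b y" using p by (auto simp: walk_two)
  have "gdist V E b y \<le> length rest" using gdist_le[OF h(2)] by simp
  moreover have "gdist V E x y \<le> gdist V E x b + gdist V E b y"
    using d_tri a cg_in[OF h(1)] by blast
  moreover have "gdist V E x b \<le> 1" using d_edge h(1) by blast
  ultimately show ?thesis using p(2) br h(1) by (intro exI[of _ b]) auto
qed

lemma geo_eq: "on_geodesic V E x y z \<Longrightarrow>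
   gdist V E y z = gdist V E y x + gdist V E x z"
proof -
  assume "on_geodesic V E x y z"
  then obtain xs where xs: "walk V E xs y z" "length xs = Suc (gdist V E y z)" "x \<in> set xs"
    unfolding on_geodesic_def by blast
  then obtain p q where pq: "walk V E p y x" "walk V E q x z"
    "length p + length q = Suc (length xs)" using walk_split[OF xs(1) xs(3)] by blast
  have "gdist V E y x \<le> length p - 1" "gdist V E x z \<le> length q - 1"
    using gdist_le[OF pq(1)] gdist_le[OF pq(2)] by auto
  moreover have "length p \<ge> 1" "length q \<ge> 1" using walk_nonempty[OF pq(1)] walk_nonempty[OF pq(2)]
    by (auto simp: Suc_le_eq)
  moreover have "gdist V E y z \<le> gdist V E y x + gdist V E x z"
    using d_tri walk_ends[OF pq(1)] walk_ends[OF pq(2)] by simp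
  ultimately show ?thesis using xs(2) pq(3) by arith
qed

lemma eq_geo: "x \<in> V \<Longrightarrow> y \<in> V \<Longrightarrow> z \<in> V \<Longrightarrow>
   gdist V E y z = gdist V E y x + gdist V E x z \<Longrightarrow> on_geodesic V E x y z"
proof -
  assume a: "x \<in> V" "y \<in> V" "z \<in> V" "gdist V E y z = gdist V E y x + gdist V E x z"
  obtain p where p: "walk V E p y x" "length p = Suc (gdist V E y x)"
    using cg_shortest a by blast
  obtain q where q: "walk V E q x z" "length q = Suc (gdist V E x z)"
    using cg_shortest a by blast
  have "x \<in> set (p @ tl q)" using p(1) unfolding walk_def
    by (metis Un_iff last_in_set set_append)
  then show ?thesis unfolding on_geodesic_def using walk_append[OF p(1) q(1)] p(2) q(2) a(4)
    by (intro exI[of _ "p @ tl q"]) auto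
qed

lemma md_end: "maximally_distant V E u v \<Longrightarrow> z \<in> V \<Longrightarrow>
   gdist V E v z = gdist V E v u + gdist V E u z \<Longrightarrow> z = u"
proof (rule ccontr)
  assume a: "maximally_distant V E u v" "z \<in> V"
     "gdist V E v z = gdist V E v u + gdist V E u z" "z \<noteq> u"
  have uv: "u \<in> V" "v \<in> V" using a(1) by (auto simp: maximally_distant_def)
  obtain w where w: "E u w" "gdist V E w z + 1 = gdist V E u z"
    using d_step[OF uv(1) a(2)] a(4) by metis
  have wV: "w \<in> V" using cg_in w(1) by blast
  have "gdist V E v z \<le> gdist V E v w + gdist V E w z" using d_tri uv wV a(2) by blast
  moreover have "gdist V E w v \<le> gdist V E u v" using a(1) w(1) by (auto simp: maximally_distant_def)
  moreover have "gdist V E w v = gdist V E v w" "gdist V E u v = gdist V E v u"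
    using d_sym uv wV by auto
  ultimately show False using a(3) w(2) by linarith
qed

lemma srs_cover: "strong_resolving_set V E S \<Longrightarrow> u \<noteq> v \<Longrightarrow> MMD V E u v \<Longrightarrow> u \<in> S \<or> v \<in> S"
proof -
  assume a: "strong_resolving_set V E S" "u \<noteq> v" "MMD V E u v"
  have uv: "u \<in> V" "v \<in> V" using a(3) by (auto simp: MMD_def maximally_distant_def)
  then obtain z where z: "z \<in> S" "on_geodesic V E u v z \<or> on_geodesic V E v u z"
    using a(1,2) unfolding strong_resolving_set_def by blast
  have zV: "z \<in> V" using z(1) a(1) by (auto simp: strong_resolving_set_def)
  show ?thesis using z(2)
  proof
    assume "on_geodesic V E u v z"
    then have "z = u" using md_end geo_eq a(3) zV by (auto simp: MMD_def)
    then show ?thesis using z by simp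
  next
    assume "on_geodesic V E v u z"
    then have "z = v" using md_end geo_eq a(3) zV by (auto simp: MMD_def)
    then show ?thesis using z by simp
  qed
qed

lemma leaf_md: "u \<in> V \<Longrightarrow> v \<in> V \<Longrightarrow> u \<noteq> v \<Longrightarrow> (\<And>w. E u w \<Longrightarrow> w = w0) \<Longrightarrow>
   maximally_distant V E u v"
proof -
  assume a: "u \<in> V" "v \<in> V" "u \<noteq> v" "\<And>w. E u w \<Longrightarrow> w = w0"
  obtain w where w: "E u w" "gdist V E w v + 1 = gdist V E u v" using d_step a by metis
  show ?thesis unfolding maximally_distant_def
  proof (intro conjI allI impI a(1,2))
    fix w' assume "E u w'"
    then have "w' = w" using a(4) w(1) by metis
    then show "gdist V E w' v \<le> gdist V E u v" using w(2) by simp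
  qed
qed

lemma finite_max_obtain:
  fixes f :: "'b \<Rightarrow> nat"
  assumes "finite A" "a \<in> A"
  obtains u where "u \<in> A" "\<And>u'. u' \<in> A \<Longrightarrow> f u' \<le> f u"
proof -
  have "Max (f ` A) \<in> f ` A" using assms by (intro Max_in) auto
  then obtain u where "u \<in> A" "f u = Max (f ` A)" by force
  then show ?thesis using that assms by (metis Max_ge finite_imageI imageI)
qed

lemma cover_srs:
  assumes SV: "S \<subseteq> V"
    and cov: "\<And>u v. u \<noteq> v \<Longrightarrow> MMD V E u v \<Longrightarrow> u \<in> S \<or> v \<in> S"
  shows "strong_resolving_set V E S"
  unfolding strong_resolving_set_def
proof (intro conjI ballI impI SV)
  fix x y assume xy: "x \<in> V" "y \<in> V" "x \<noteq> y"
  let ?d = "gdist V E"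
  define A where "A = {u \<in> V. ?d x u = ?d x y + ?d y u}"
  have "y \<in> A" using xy d_self by (simp add: A_def)
  then obtain u where u: "u \<in> A" and umax: "\<And>u'. u' \<in> A \<Longrightarrow> ?d x u' \<le> ?d x u"
    using finite_max_obtain[of A y "?d x"] cg_fin A_def by auto
  have uV: "u \<in> V" and ueq: "?d x u = ?d x y + ?d y u" using u by (auto simp: A_def)
  define B where "B = {v \<in> V. ?d u v = ?d u x + ?d x v}"
  have "x \<in> B" using xy d_self by (simp add: B_def)
  then obtain v where v: "v \<in> B" and vmax: "\<And>v'. v' \<in> B \<Longrightarrow> ?d u v' \<le> ?d u v"
    using finite_max_obtain[of B x "?d u"] cg_fin B_def by auto
  have vV: "v \<in> V" and veq: "?d u v = ?d u x + ?d x v" using v by (auto simp: B_def)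
  have md1: "maximally_distant V E v u"
    unfolding maximally_distant_def
  proof (intro conjI allI impI uV vV)
    fix w assume e: "E v w"
    have wV: "w \<in> V" using cg_in e by blast
    show "?d w u \<le> ?d v u"
    proof (rule ccontr)
      assume c: "\<not> ?d w u \<le> ?d v u"
      have "?d u w \<le> ?d u v + ?d v w" using d_tri uV vV wV by blast
      moreover have "?d v w \<le> 1" using d_edge e by blast
      moreover have "?d x w \<le> ?d x v + ?d v w" using d_tri xy vV wV by blast
      moreover have "?d u w \<le> ?d u x + ?d x w" using d_tri xy uV wV by blast
      moreover have "?d w u = ?d u w" "?d v u = ?d u v" using d_sym uV vV wV by auto
      ultimately have "?d u w = ?d u x + ?d x w" "?d u w > ?d u v" using c veq by linarith+
      then show False using vmax[of w] wV by (auto simp: B_def)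
    qed
  qed
  have md2: "maximally_distant V E u v"
    unfolding maximally_distant_def
  proof (intro conjI allI impI uV vV)
    fix w assume e: "E u w"
    have wV: "w \<in> V" using cg_in e by blast
    show "?d w v \<le> ?d u v"
    proof (rule ccontr)
      assume c: "\<not> ?d w v \<le> ?d u v"
      have "?d w v \<le> ?d w u + ?d u v" using d_tri uV vV wV by blast
      moreover have "?d u w \<le> 1" using d_edge e by blast
      moreover have "?d w v \<le> ?d w x + ?d x v" using d_tri xy vV wV by blast
      moreover have "?d x w \<le> ?d x u + ?d u w" using d_tri xy uV wV by blast
      moreover have "?d y w \<le> ?d y u + ?d u w" using d_tri xy uV wV by blast
      moreover have "?d x w \<le> ?d x y + ?d y w" using d_tri xy wV by blast
      moreover have "?d w u = ?d u w" "?d w x = ?d x w" "?d u x = ?d x u"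
        using d_sym uV xy wV by auto
      ultimately have "?d x w = ?d x y + ?d y w" "?d x w > ?d x u" using c veq ueq by linarith+
      then show False using umax[of w] wV by (auto simp: A_def)
    qed
  qed
  have "u \<noteq> v"
  proof
    assume "u = v"
    then have "?d u x = 0" using veq d_self uV by simp
    then have "u = x" using d_self_0 uV xy by blast
    then have "?d x y = 0" using ueq d_self xy by simp
    then show False using d_self_0 xy by blast
  qed
  then have "u \<in> S \<or> v \<in> S" using cov md1 md2 by (simp add: MMD_def)
  then show "\<exists>z\<in>S. on_geodesic V E x y z \<or> on_geodesic V E y x z"
  proof
    assume "u \<in> S"
    moreover have "on_geodesic V E y x u" using eq_geo xy uV ueq by blast
    ultimately show ?thesis by blast
  next
    assume vS: "v \<in> S"
    have "?d u v \<le> ?d u y + ?d y v" using d_tri uV vV xy by blast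
    moreover have "?d y v \<le> ?d y x + ?d x v" using d_tri vV xy by blast
    moreover have "?d u x = ?d x u" "?d u y = ?d y u" "?d y x = ?d x y" using d_sym uV xy by auto
    ultimately have "?d y v = ?d y x + ?d x v" using veq ueq by linarith
    then have "on_geodesic V E x y v" using eq_geo xy vV by blast
    then show ?thesis using vS by blast
  qed
qed

lemma srs_V: "strong_resolving_set V E V"
  by (rule cover_srs) (auto simp: MMD_def maximally_distant_def)

lemma sdim_le: "strong_resolving_set V E S \<Longrightarrow> sdim V E \<le> card S"
proof -
  assume s: "strong_resolving_set V E S"
  have "{card S | S. strong_resolving_set V E S} \<subseteq> card ` Pow V"
    by (auto simp: strong_resolving_set_def)
  then have "finite {card S | S. strong_resolving_set V E S}"
    using cg_fin finite_subset by blast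
  then show ?thesis unfolding sdim_def using s by (intro Min_le) auto
qed

lemma sdim_attained: "\<exists>S. strong_resolving_set V E S \<and> card S = sdim V E"
proof -
  have "{card S | S. strong_resolving_set V E S} \<subseteq> card ` Pow V"
    by (auto simp: strong_resolving_set_def)
  then have "finite {card S | S. strong_resolving_set V E S}"
    using cg_fin finite_subset by blast
  moreover have "{card S | S. strong_resolving_set V E S} \<noteq> {}" using srs_V by blast
  ultimately have "sdim V E \<in> {card S | S. strong_resolving_set V E S}"
    unfolding sdim_def by (rule Min_in)
  then show ?thesis by auto
qed

end

lemma partB:
  fixes VG :: "'a set" and VH :: "'b set"
  assumes cG: "connected_graph VG EG" and cH: "connected_graph VH EH"
    and iso: "subgraph_iso (SR_vertices VH EH) (SR_edges VH EH)
                         (SR_vertices VG EG) (SR_edges VG EG)"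
  shows "sdim VH EH \<le> sdim VG EG"
proof -
  obtain S where S: "strong_resolving_set VG EG S" "card S = sdim VG EG"
    using sdim_attained[OF cG] by blast
  obtain f where f: "inj_on f (SR_vertices VH EH)"
    "\<And>x y. x \<in> SR_vertices VH EH \<Longrightarrow> y \<in> SR_vertices VH EH \<Longrightarrow>
        SR_edges VH EH x y \<Longrightarrow> SR_edges VG EG (f x) (f y)"
    using iso unfolding subgraph_iso_def by (elim exE conjE) (rule that, assumption, blast)
  define T where "T = {x \<in> SR_vertices VH EH. f x \<in> S}"
  have "strong_resolving_set VH EH T"
  proof (rule cover_srs[OF cH])
    show "T \<subseteq> VH" by (auto simp: T_def SR_vertices_def)
  next
    fix u v assume uv: "u \<noteq> v" "MMD VH EH u v"
    have "MMD VH EH v u" using uv by (auto simp: MMD_def)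
    have "u \<in> VH" "v \<in> VH" using uv(2) by (simp_all add: MMD_def maximally_distant_def)
    then have inV: "u \<in> SR_vertices VH EH" "v \<in> SR_vertices VH EH"
      using uv(2) \<open>MMD VH EH v u\<close> unfolding SR_vertices_def by blast+
    have "SR_edges VG EG (f u) (f v)" using f(2)[OF inV] uv by (simp add: SR_edges_def)
    then have "f u \<in> S \<or> f v \<in> S" using srs_cover[OF cG S(1)] by (simp add: SR_edges_def)
    then show "u \<in> T \<or> v \<in> T" using inV by (auto simp: T_def)
  qed
  then have "sdim VH EH \<le> card T" by (rule sdim_le[OF cH])
  also have "card T \<le> card S"
  proof (rule card_inj_on_le)
    show "inj_on f T" using f(1) by (rule inj_on_subset) (simp add: T_def)
    show "f ` T \<subseteq> S" by (auto simp: T_def)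
    show "finite S" using S(1) cg_fin[OF cG] finite_subset by (auto simp: strong_resolving_set_def)
  qed
  finally show ?thesis using S(2) by simp
qed



lemma pot_walk:
  assumes y: "y \<in> V" and z: "\<forall>x\<in>V. g x = 0 \<longrightarrow> x = y"
    and st: "\<forall>x\<in>V. 0 < g x \<longrightarrow> (\<exists>w\<in>V. E x w \<and> g w + 1 = (g x :: nat))"
  shows "x \<in> V \<Longrightarrow> \<exists>xs. walk V E xs x y \<and> length xs = Suc (g x)"
proof (induction "g x" arbitrary: x)
  case 0
  then show ?case using z y by (intro exI[of _ "[x]"]) (auto simp: walk_one)
next
  case (Suc k)
  then obtain w where w: "w \<in> V" "E x w" "g w + 1 = g x" using st by force
  then obtain xs where xs: "walk V E xs w y" "length xs = Suc (g w)" using Suc by force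
  then obtain rest where "xs = w # rest" by (cases xs) (auto simp: walk_def)
  then have "walk V E (x # xs) x y" using xs w Suc.prems by (simp add: walk_two)
  then show ?case using xs w by (intro exI[of _ "x # xs"]) auto
qed

lemma pot_lower:
  assumes lip: "\<forall>a b. E a b \<longrightarrow> g a \<le> g b + (1::nat)"
  shows "walk V E xs x y \<Longrightarrow> g x \<le> g y + (length xs - 1)"
proof (induction xs arbitrary: x)
  case Nil then show ?case by (simp add: walk_def)
next
  case (Cons a xs)
  show ?case
  proof (cases xs)
    case Nil then show ?thesis using Cons.prems by (auto simp: walk_one)
  next
    case (Cons b rest)
    then have h: "a = x" "E a b" "walk V E (b # rest) b y" using Cons.prems by (auto simp: walk_two)
    then have "g b \<le> g y + (length xs - 1)" using Cons.IH local.Cons by blast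
    then show ?thesis using lip h local.Cons by fastforce
  qed
qed

lemma pot_dist:
  assumes cg: "connected_graph V E" and y: "y \<in> V" and g0: "g y = 0"
    and z: "\<forall>x\<in>V. g x = 0 \<longrightarrow> x = y"
    and st: "\<forall>x\<in>V. 0 < g x \<longrightarrow> (\<exists>w\<in>V. E x w \<and> g w + 1 = (g x :: nat))"
    and lip: "\<forall>a b. E a b \<longrightarrow> g a \<le> g b + (1::nat)"
    and x: "x \<in> V"
  shows "gdist V E x y = g x"
proof -
  obtain xs where "walk V E xs x y" "length xs = Suc (g x)" using pot_walk[OF y z st x] by blast
  then have "gdist V E x y \<le> g x" using gdist_le by fastforce
  moreover obtain ys where "walk V E ys x y" "length ys = Suc (gdist V E x y)"
    using cg_shortest[OF cg x y] by blast
  then have "g x \<le> gdist V E x y" using pot_lower[OF lip] g0 by fastforce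
  ultimately show ?thesis by simp
qed

lemma pot_connected:
  assumes sg: "simple_graph V E" and ne: "V \<noteq> {}"
    and pot: "\<And>y. y \<in> V \<Longrightarrow> (\<forall>x\<in>V. p x y = 0 \<longrightarrow> x = y) \<and>
        (\<forall>x\<in>V. 0 < p x y \<longrightarrow> (\<exists>w\<in>V. E x w \<and> p w y + 1 = (p x y :: nat)))"
  shows "connected_graph V E"
  unfolding connected_graph_def
proof (intro conjI sg ne ballI)
  fix x y assume "x \<in> V" "y \<in> V"
  then show "\<exists>xs. walk V E xs x y" using pot_walk[of y V "\<lambda>x. p x y" E x] pot by blast
qed


definition EG :: "nat \<Rightarrow> nat \<Rightarrow> nat \<Rightarrow> bool" where
  "EG n x y \<longleftrightarrow> x < 2*n \<and> y < 2*n \<and> (x + 2 = y \<or> y + 2 = x \<or> (x div 2 = y div 2 \<and> x \<noteq> y))"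
definition EH :: "nat \<Rightarrow> nat \<Rightarrow> nat \<Rightarrow> bool" where
  "EH n x y \<longleftrightarrow> x < 2*n \<and> y < 2*n \<and>
     ((even x \<and> (x + 2 = y \<or> y + 2 = x)) \<or> (x div 2 = y div 2 \<and> x \<noteq> y))"
definition cd :: "nat \<Rightarrow> nat \<Rightarrow> nat" where
  "cd x y = (if x div 2 \<le> y div 2 then y div 2 - x div 2 else x div 2 - y div 2)"
definition dG :: "nat \<Rightarrow> nat \<Rightarrow> nat" where
  "dG x y = (if x mod 2 = y mod 2 then 0 else 1) + cd x y"
definition dH :: "nat \<Rightarrow> nat \<Rightarrow> nat" where
  "dH x y = (if x div 2 = y div 2 then (if x = y then 0 else 1) else x mod 2 + y mod 2 + cd x y)"

lemma decomp: fixes x :: nat obtains i a where "x = 2*i + a" "a < 2"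
  by (metis div_mult_mod_eq mult.commute mod_less_divisor zero_less_numeral)

lemma dm: "(c::nat) < 2 \<Longrightarrow> (2*k + c) div 2 = k" "(c::nat) < 2 \<Longrightarrow> (2*k+c) mod 2 = c"
  by auto

lemma enc_eq: "(c::nat) < 2 \<Longrightarrow> d < 2 \<Longrightarrow> (2*i+c = 2*j+d) \<longleftrightarrow> (i = j \<and> c = d)"
  by presburger
lemma enc_p2: "(c::nat) < 2 \<Longrightarrow> d < 2 \<Longrightarrow> (2*i+c+2 = 2*j+d) \<longleftrightarrow> (j = i + 1 \<and> c = d)"
  by presburger
lemma enc_lt: "(c::nat) < 2 \<Longrightarrow> (2*i+c < 2*n) \<longleftrightarrow> i < n"
  by presburger

definition dist1 :: "nat \<Rightarrow> nat \<Rightarrow> nat" where "dist1 i j = (if i \<le> j then j - i else i - j)"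

lemma dH_eq: "c < 2 \<Longrightarrow> d < 2 \<Longrightarrow> dH (2*i+c) (2*j+d) =
   (if i = j then (if c = d then 0 else 1) else c + d + dist1 i j)"
  by (simp add: dH_def cd_def dm enc_eq dist1_def)
lemma dG_eq: "c < 2 \<Longrightarrow> d < 2 \<Longrightarrow> dG (2*i+c) (2*j+d) = (if c = d then 0 else 1) + dist1 i j"
  by (simp add: dG_def cd_def dm dist1_def)
lemma EH_eq: "c < 2 \<Longrightarrow> d < 2 \<Longrightarrow> EH n (2*i+c) (2*j+d) \<longleftrightarrow> i < n \<and> j < n \<and>
   ((c = 0 \<and> d = 0 \<and> (j = i + 1 \<or> i = j + 1)) \<or> (i = j \<and> c \<noteq> d))"
  unfolding EH_def by (simp add: dm enc_eq enc_p2 enc_lt) presburger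
lemma EG_eq: "c < 2 \<Longrightarrow> d < 2 \<Longrightarrow> EG n (2*i+c) (2*j+d) \<longleftrightarrow> i < n \<and> j < n \<and>
   ((c = d \<and> (j = i + 1 \<or> i = j + 1)) \<or> (i = j \<and> c \<noteq> d))"
  unfolding EG_def by (simp add: dm enc_eq enc_p2 enc_lt) presburger

lemma G_step': assumes "c < 2" "d < 2" "i < n" "j < n" "0 < dG (2*i+c) (2*j+d)"
  shows "\<exists>k e. e < 2 \<and> k < n \<and> EG n (2*i+c) (2*k+e) \<and> dG (2*k+e) (2*j+d) + 1 = dG (2*i+c) (2*j+d)"
proof -
  consider "i = j" | "i < j" | "j < i" by arith
  then show ?thesis
  proof cases
    case 1 then show ?thesis using assms
      using EG_eq[of c d n i j] dG_eq[of d d j j] dG_eq[of c d i j]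
      by (intro exI[of _ j] exI[of _ d]) (auto simp: dist1_def)
  next
    case 2 then show ?thesis using assms
      using EG_eq[of c c n i "i+1"] dG_eq[of c d "i+1" j] dG_eq[of c d i j]
      by (intro exI[of _ "i+1"] exI[of _ c]) (auto simp: dist1_def)
  next
    case 3 then show ?thesis using assms
      using EG_eq[of c c n i "i-1"] dG_eq[of c d "i-1" j] dG_eq[of c d i j]
      by (intro exI[of _ "i-1"] exI[of _ c]) (auto simp: dist1_def)
  qed
qed

lemma H_step': assumes "c < 2" "d < 2" "i < n" "j < n" "0 < dH (2*i+c) (2*j+d)"
  shows "\<exists>k e. e < 2 \<and> k < n \<and> EH n (2*i+c) (2*k+e) \<and> dH (2*k+e) (2*j+d) + 1 = dH (2*i+c) (2*j+d)"
proof -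
  consider "i = j" | "i \<noteq> j" "c = 1" | "i < j" "c = 0" | "j < i" "c = 0" using assms(1) by arith
  then show ?thesis
  proof cases
    case 1 then show ?thesis using assms
      using EH_eq[of c d n i j] dH_eq[of d d j j] dH_eq[of c d i j]
      by (intro exI[of _ j] exI[of _ d]) (auto simp: dist1_def)
  next
    case 2 then show ?thesis using assms
      using EH_eq[of c 0 n i i] dH_eq[of 0 d i j] dH_eq[of c d i j]
      by (intro exI[of _ i] exI[of _ 0]) (auto simp: dist1_def)
  next
    case 3 then show ?thesis using assms
      using EH_eq[of c 0 n i "i+1"] dH_eq[of 0 d "i+1" j] dH_eq[of c d i j]
      by (intro exI[of _ "i+1"] exI[of _ 0]) (auto simp: dist1_def)
  next
    case 4 then show ?thesis using assms
      using EH_eq[of c 0 n i "i-1"] dH_eq[of 0 d "i-1" j] dH_eq[of c d i j]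
      by (intro exI[of _ "i-1"] exI[of _ 0]) (auto simp: dist1_def)
  qed
qed

lemma G_lip': "c < 2 \<Longrightarrow> d < 2 \<Longrightarrow> f < 2 \<Longrightarrow> EG n (2*i+c) (2*k+f) \<Longrightarrow>
   dG (2*i+c) (2*j+d) \<le> dG (2*k+f) (2*j+d) + 1"
  using EG_eq[of c f n i k] dG_eq[of c d i j] dG_eq[of f d k j] by (auto simp: dist1_def)

lemma H_lip': "c < 2 \<Longrightarrow> d < 2 \<Longrightarrow> f < 2 \<Longrightarrow> EH n (2*i+c) (2*k+f) \<Longrightarrow>
   dH (2*i+c) (2*j+d) \<le> dH (2*k+f) (2*j+d) + 1"
  using EH_eq[of c f n i k] dH_eq[of c d i j] dH_eq[of f d k j] by (auto simp: dist1_def)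

lemma G_far': "c < 2 \<Longrightarrow> d < 2 \<Longrightarrow> i < n \<Longrightarrow> 1 \<le> i \<Longrightarrow> i \<le> j \<Longrightarrow>
   EG n (2*i+c) (2*(i-1)+c) \<and> dG (2*(i-1)+c) (2*j+d) = dG (2*i+c) (2*j+d) + 1"
  using EG_eq[of c c n i "i-1"] dG_eq[of c d "i-1" j] dG_eq[of c d i j] by (auto simp: dist1_def)

lemma H_leaf': "e < 2 \<Longrightarrow> EH n (2*i+1) (2*k+e) \<Longrightarrow> k = i \<and> e = 0"
  using EH_eq[of 1 e n i k] by auto


lemma enc_lt': "(c::nat) < 2 \<Longrightarrow> 2*i+c < 2*n \<Longrightarrow> i < n" using enc_lt by blast

lemma G_simple: "simple_graph {..<2*n} (EG n)"
  unfolding simple_graph_def EG_def by auto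

lemma H_simple: "simple_graph {..<2*n} (EH n)"
  unfolding simple_graph_def EH_def by auto

lemma G_self: "dG y y = 0" by (simp add: dG_def cd_def)
lemma H_self: "dH y y = 0" by (simp add: dH_def cd_def)

lemma G_zero: "dG x y = 0 \<Longrightarrow> x = y"
proof -
  assume a: "dG x y = 0"
  obtain i c where x: "x = 2*i + c" "c < 2" by (rule decomp)
  obtain j d where y: "y = 2*j + d" "d < 2" by (rule decomp)
  show ?thesis using a dG_eq[OF x(2) y(2), of i j] x y by (auto simp: dist1_def split: if_splits)
qed

lemma H_zero: "dH x y = 0 \<Longrightarrow> x = y"
  unfolding dH_def cd_def by (auto split: if_splits)

lemma G_step: "x < 2*n \<Longrightarrow> y < 2*n \<Longrightarrow> 0 < dG x y \<Longrightarrow>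
  (\<exists>w\<in>{..<2*n}. EG n x w \<and> dG w y + 1 = dG x y)"
proof -
  assume a: "x < 2*n" "y < 2*n" "0 < dG x y"
  obtain i c where x: "x = 2*i + c" "c < 2" by (rule decomp)
  obtain j d where y: "y = 2*j + d" "d < 2" by (rule decomp)
  have "i < n" "j < n" using a x y enc_lt' by blast+
  then obtain k e where "e < 2" "k < n" "EG n x (2*k+e)" "dG (2*k+e) y + 1 = dG x y"
    using G_step'[OF x(2) y(2)] a x y by blast
  moreover have "2*k+e < 2*n" using calculation enc_lt by blast
  ultimately show ?thesis by blast
qed

lemma H_step: "x < 2*n \<Longrightarrow> y < 2*n \<Longrightarrow> 0 < dH x y \<Longrightarrow>
  (\<exists>w\<in>{..<2*n}. EH n x w \<and> dH w y + 1 = dH x y)"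
proof -
  assume a: "x < 2*n" "y < 2*n" "0 < dH x y"
  obtain i c where x: "x = 2*i + c" "c < 2" by (rule decomp)
  obtain j d where y: "y = 2*j + d" "d < 2" by (rule decomp)
  have "i < n" "j < n" using a x y enc_lt' by blast+
  then obtain k e where "e < 2" "k < n" "EH n x (2*k+e)" "dH (2*k+e) y + 1 = dH x y"
    using H_step'[OF x(2) y(2)] a x y by blast
  moreover have "2*k+e < 2*n" using calculation enc_lt by blast
  ultimately show ?thesis by blast
qed

lemma G_lip: "EG n a b \<Longrightarrow> dG a y \<le> dG b y + 1"
proof -
  assume e: "EG n a b"
  obtain i c where x: "a = 2*i + c" "c < 2" by (rule decomp)
  obtain k f where z: "b = 2*k + f" "f < 2" by (rule decomp)
  obtain j d where y: "y = 2*j + d" "d < 2" by (rule decomp)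
  show ?thesis using G_lip'[OF x(2) y(2) z(2), of n i k j] e x y z by simp
qed

lemma H_lip: "EH n a b \<Longrightarrow> dH a y \<le> dH b y + 1"
proof -
  assume e: "EH n a b"
  obtain i c where x: "a = 2*i + c" "c < 2" by (rule decomp)
  obtain k f where z: "b = 2*k + f" "f < 2" by (rule decomp)
  obtain j d where y: "y = 2*j + d" "d < 2" by (rule decomp)
  show ?thesis using H_lip'[OF x(2) y(2) z(2), of n i k j] e x y z by simp
qed

lemma G_far: "x < 2*n \<Longrightarrow> y < 2*n \<Longrightarrow> 2 \<le> x \<Longrightarrow> x div 2 \<le> y div 2 \<Longrightarrow>
   EG n x (x - 2) \<and> dG (x - 2) y = dG x y + 1"
proof -
  assume a: "x < 2*n" "y < 2*n" "2 \<le> x" "x div 2 \<le> y div 2"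
  obtain i c where x: "x = 2*i + c" "c < 2" by (rule decomp)
  obtain j d where y: "y = 2*j + d" "d < 2" by (rule decomp)
  have xd: "x div 2 = i" using dm(1)[OF x(2)] x(1) by simp
  have yd: "y div 2 = j" using dm(1)[OF y(2)] y(1) by simp
  have i: "i < n" "1 \<le> i" "i \<le> j" using a(1,3,4) x enc_lt'[OF x(2)] xd yd by auto
  have "x - 2 = 2*(i-1) + c" using x i by auto
  then show ?thesis using G_far'[OF x(2) y(2) i] x y by simp
qed

lemma H_leaf: "odd u \<Longrightarrow> EH n u w \<Longrightarrow> w = u - 1"
proof -
  assume a: "odd u" "EH n u w"
  obtain i c where x: "u = 2*i + c" "c < 2" by (rule decomp)
  obtain k e where y: "w = 2*k + e" "e < 2" by (rule decomp)
  have "c = 1" using a(1) x by presburger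
  then show ?thesis using H_leaf'[OF y(2), of n i k] a x y by simp
qed

lemma G_conn: "n \<ge> 1 \<Longrightarrow> connected_graph {..<2*n} (EG n)"
  by (rule pot_connected[OF G_simple, of _ dG]) (use G_zero G_step in \<open>auto simp: lessThan_empty_iff\<close>)

lemma H_conn: "n \<ge> 1 \<Longrightarrow> connected_graph {..<2*n} (EH n)"
  by (rule pot_connected[OF H_simple, of _ dH]) (use H_zero H_step in \<open>auto simp: lessThan_empty_iff\<close>)

lemma G_dist: "n \<ge> 1 \<Longrightarrow> x < 2*n \<Longrightarrow> y < 2*n \<Longrightarrow> gdist {..<2*n} (EG n) x y = dG x y"
  by (rule pot_dist[OF G_conn, of n y "\<lambda>x. dG x y"]) (use G_zero G_step G_lip G_self in auto)

lemma G_sdim_le: assumes n: "n \<ge> 1" shows "sdim {..<2*n} (EG n) \<le> 2"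
proof -
  let ?V = "{..<2*n}"
  have c: "connected_graph ?V (EG n)" using G_conn n .
  have notmd: False if md: "maximally_distant ?V (EG n) u v" and u2: "2 \<le> u" and le: "u div 2 \<le> v div 2" for u v
  proof -
    have uv: "u < 2*n" "v < 2*n" using md by (auto simp: maximally_distant_def)
    have f: "EG n u (u - 2)" "dG (u - 2) v = dG u v + 1" using G_far[OF uv u2 le] by auto
    have "gdist ?V (EG n) (u - 2) v \<le> gdist ?V (EG n) u v"
      using md f(1) by (auto simp: maximally_distant_def)
    moreover have "u - 2 < 2*n" using uv by simp
    ultimately show False using G_dist[OF n] uv f(2) by simp
  qed
  have "strong_resolving_set ?V (EG n) {0, 1}"
  proof (rule cover_srs[OF c])
    show "{0, 1} \<subseteq> ?V" using n by auto
  next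
    fix u v assume "u \<noteq> v" "MMD ?V (EG n) u v"
    then have m: "maximally_distant ?V (EG n) u v" "maximally_distant ?V (EG n) v u"
      by (auto simp: MMD_def)
    show "u \<in> {0, 1} \<or> v \<in> {0, 1}"
    proof (rule ccontr)
      assume "\<not> (u \<in> {0, 1} \<or> v \<in> {0, 1})"
      then have "2 \<le> u" "2 \<le> v" by auto
      then show False
      proof (cases "u div 2 \<le> v div 2")
        case True then show False using notmd[OF m(1) \<open>2 \<le> u\<close>] by blast
      next
        case False then have "v div 2 \<le> u div 2" by simp
        then show False using notmd[OF m(2) \<open>2 \<le> v\<close>] by blast
      qed
    qed
  qed
  then have "sdim ?V (EG n) \<le> card {0::nat, 1}" by (rule sdim_le[OF c])
  then show ?thesis by simp
qed

lemma G_sdim_ge: assumes n: "n \<ge> 1" shows "sdim {..<2*n} (EG n) \<ge> 1"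
proof -
  let ?V = "{..<2*n}"
  have c: "connected_graph ?V (EG n)" using G_conn n .
  obtain S where S: "strong_resolving_set ?V (EG n) S" "card S = sdim ?V (EG n)"
    using sdim_attained[OF c] by blast
  have a01: "(0::nat) \<in> ?V" "(1::nat) \<in> ?V" using n by auto
  have all: "\<forall>x\<in>?V. \<forall>y\<in>?V. x \<noteq> y \<longrightarrow>
        (\<exists>z\<in>S. on_geodesic ?V (EG n) x y z \<or> on_geodesic ?V (EG n) y x z)"
    using S(1) unfolding strong_resolving_set_def by blast
  have "\<exists>z\<in>S. on_geodesic ?V (EG n) 0 1 z \<or> on_geodesic ?V (EG n) 1 0 z"
    using all[rule_format, OF a01] by simp
  then have ne: "S \<noteq> {}" by blast
  have "finite S" using S(1) cg_fin[OF c] finite_subset by (auto simp: strong_resolving_set_def)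
  then have "card S \<ge> 1" using ne by (simp add: Suc_le_eq card_gt_0_iff)
  then show ?thesis using S(2) by simp
qed

lemma H_sdim_ge: assumes n: "n \<ge> 1" shows "sdim {..<2*n} (EH n) + 1 \<ge> n"
proof -
  let ?V = "{..<2*n}"
  have c: "connected_graph ?V (EH n)" using H_conn n .
  obtain S where S: "strong_resolving_set ?V (EH n) S" "card S = sdim ?V (EH n)"
    using sdim_attained[OF c] by blast
  have finS: "finite S" using S(1) by (auto simp: strong_resolving_set_def intro: finite_subset)
  define L where "L = (\<lambda>i. 2*i+1) ` {..<n}"
  have cardL: "card L = n" unfolding L_def by (subst card_image) (auto simp: inj_on_def)
  have Lodd: "x \<in> L \<Longrightarrow> odd x \<and> x < 2*n" for x unfolding L_def by auto
  have cover: "u \<in> S \<or> v \<in> S" if "u \<in> L" "v \<in> L" "u \<noteq> v" for u v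
  proof -
    have "maximally_distant ?V (EH n) u v"
      using leaf_md[OF c, of u v "u - 1"] Lodd that H_leaf by auto
    moreover have "maximally_distant ?V (EH n) v u"
      using leaf_md[OF c, of v u "v - 1"] Lodd that H_leaf by auto
    ultimately show ?thesis using srs_cover[OF c S(1) \<open>u \<noteq> v\<close>] by (simp add: MMD_def)
  qed
  have finL: "finite L" unfolding L_def by simp
  have "card (L - S) \<le> Suc 0"
    using card_le_Suc0_iff_eq[of "L - S"] finL cover by auto
  moreover have "card L = card (L \<inter> S) + card (L - S)" using card_Int_Diff[OF finL] .
  moreover have "card (L \<inter> S) \<le> card S" using finS by (simp add: card_mono)
  ultimately show ?thesis using cardL S(2) by linarith
qed

lemma partA:
  fixes M :: real assumes M: "M > 0"
  shows "\<exists>(VH::nat set) EH VG EG.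
               connected_graph VH EH \<and> connected_graph VG EG \<and> subgraph VH EH VG EG \<and>
               real (sdim VH EH) / real (sdim VG EG) > M"
proof -
  define n where "n = nat \<lceil>2*M\<rceil> + 2"
  have n1: "n \<ge> 1" unfolding n_def by simp
  have c0: "0 \<le> \<lceil>2*M\<rceil>" using M by simp
  have "real (nat \<lceil>2*M\<rceil>) = real_of_int \<lceil>2*M\<rceil>" using of_nat_nat[OF c0] by simp
  moreover have "2*M \<le> real_of_int \<lceil>2*M\<rceil>" by (rule le_of_int_ceiling)
  ultimately have "real (nat \<lceil>2*M\<rceil>) \<ge> 2*M" by simp
  then have nM: "real n - 1 > 2*M" unfolding n_def by simp
  let ?V = "{..<2*n}"
  have h: "real (sdim ?V (EH n)) \<ge> real n - 1" using H_sdim_ge[OF n1] by linarith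
  have g1: "real (sdim ?V (EG n)) \<ge> 1" using G_sdim_ge[OF n1] by simp
  have g2: "real (sdim ?V (EG n)) \<le> 2" using G_sdim_le[OF n1] by simp
  have "real (sdim ?V (EH n)) / real (sdim ?V (EG n)) \<ge> real (sdim ?V (EH n)) / 2"
    using g1 g2 by (intro divide_left_mono) auto
  moreover have "real (sdim ?V (EH n)) / 2 > M" using h nM by simp
  ultimately have "real (sdim ?V (EH n)) / real (sdim ?V (EG n)) > M" by linarith
  moreover have "subgraph ?V (EH n) ?V (EG n)"
    unfolding subgraph_def EH_def EG_def by auto
  ultimately show ?thesis using G_conn[OF n1] H_conn[OF n1] by blast
qed

theorem mainTheorem1:
  shows "(\<forall>M::real. M > 0 \<longrightarrow>
            (\<exists>(VH::nat set) EH VG EG.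
               connected_graph VH EH \<and> connected_graph VG EG \<and> subgraph VH EH VG EG \<and>
               real (sdim VH EH) / real (sdim VG EG) > M))
       \<and> (\<forall>(VG::'a set) EG (VH::'b set) EH.
            connected_graph VG EG \<longrightarrow> connected_graph VH EH \<longrightarrow>
            subgraph_iso (SR_vertices VH EH) (SR_edges VH EH)
                         (SR_vertices VG EG) (SR_edges VG EG) \<longrightarrow>
            sdim VH EH \<le> sdim VG EG)"
  using partA partB by blast

end
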